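(* Let $\mathrm{E}$ be a law of the form $\mathrm{x}\simeq\mathrm{x}\diamond f(\mathrm{x},\mathrm{y},\mathrm{z})$, for some word $f$ in $\mathrm{x},\mathrm{y},\mathrm{z}$, which implies $\mathrm{x}\diamond\mathrm{y}\simeq(\mathrm{x}\diamond\mathrm{y})\diamond\mathrm{y}$. Two irreducible words $w,w'\in M_X$ satisfy $w\sim_{\mathrm{E}}w'$ if and only if either they are the same letter of $X$, or $w=w_1\diamond w_2$ and $w'=w_1'\diamond w_2'$ with $w_1\sim_{\mathrm{E}}w_1'$ and $w_2\sim_{\mathrm{E}}w_2'$.
   Context: $M_X$ is the set of words of the free magma on an alphabet $X$. $u\sim_{\mathrm{E}}u'$ means the law $u\simeq u'$ holds in every magma satisfying $\mathrm{E}$. For words $u,u'$, $u'\to_{\mathrm{E}}u$ means $u\sim_{\mathrm{E}}u''\diamond u'$ for some word $u''$ (equivalently, under the hypotheses, $u\sim_{\mathrm{E}}u\diamond u'$). A word is irreducible if it is not of the form $w_1\diamond w_2$ with $w_2\to_{\mathrm{E}}w_1$. *)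

theory Defs
  imports Main
begin

datatype 'a mw = Leaf 'a | Op "'a mw" "'a mw"

datatype var = Vx | Vy | Vz

fun eval :: "('m \<Rightarrow> 'm \<Rightarrow> 'm) \<Rightarrow> ('v \<Rightarrow> 'm) \<Rightarrow> 'v mw \<Rightarrow> 'm" where
  "eval op \<rho> (Leaf v) = \<rho> v"
| "eval op \<rho> (Op u w) = op (eval op \<rho> u) (eval op \<rho> w)"

definition magma_on :: "'m set \<Rightarrow> ('m \<Rightarrow> 'm \<Rightarrow> 'm) \<Rightarrow> bool" where
  "magma_on S op \<longleftrightarrow> (\<forall>a\<in>S. \<forall>b\<in>S. op a b \<in> S)"

definition satisfies :: "'m set \<Rightarrow> ('m \<Rightarrow> 'm \<Rightarrow> 'm) \<Rightarrow> 'v mw \<Rightarrow> 'v mw \<Rightarrow> bool" where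
  "satisfies S op u u' \<longleftrightarrow> (\<forall>\<rho>. range \<rho> \<subseteq> S \<longrightarrow> eval op \<rho> u = eval op \<rho> u')"

definition E_lhs :: "var mw" where "E_lhs = Leaf Vx"
definition E_rhs :: "var mw \<Rightarrow> var mw" where "E_rhs f = Op (Leaf Vx) f"

(* Magmas are taken with carrier a subset of the (infinite) type 'a mw; by
   Birkhoff this universe is large enough (relatively free magmas on X embed). *)
definition simE :: "var mw \<Rightarrow> 'a mw \<Rightarrow> 'a mw \<Rightarrow> bool" where
  "simE f u u' \<longleftrightarrow>
     (\<forall>(S :: 'a mw set) op. magma_on S op \<and> satisfies S op E_lhs (E_rhs f)
        \<longrightarrow> satisfies S op u u')"

definition E_implies_right_absorb :: "var mw \<Rightarrow> 'a itself \<Rightarrow> bool" where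
  "E_implies_right_absorb f (_ :: 'a itself) \<longleftrightarrow>
     (\<forall>(S :: 'a mw set) op. magma_on S op \<and> satisfies S op E_lhs (E_rhs f)
        \<longrightarrow> satisfies S op (Op (Leaf Vx) (Leaf Vy)) (Op (Op (Leaf Vx) (Leaf Vy)) (Leaf Vy)))"

definition reducesE :: "var mw \<Rightarrow> 'a mw \<Rightarrow> 'a mw \<Rightarrow> bool" where
  "reducesE f u' u \<longleftrightarrow> (\<exists>u''. simE f u (Op u'' u'))"

definition irreducibleE :: "var mw \<Rightarrow> 'a mw \<Rightarrow> bool" where
  "irreducibleE f w \<longleftrightarrow> \<not> (\<exists>w1 w2. w = Op w1 w2 \<and> reducesE f w2 w1)"

end

theory Submission
  imports Defs
begin

lemma simE_refl: "simE f u u"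
  by (simp add: simE_def satisfies_def)

lemma simE_sym: "simE f u v \<Longrightarrow> simE f v u"
  unfolding simE_def satisfies_def by metis

lemma simE_trans: "simE f u v \<Longrightarrow> simE f v w \<Longrightarrow> simE f u w"
  unfolding simE_def satisfies_def by metis

lemma simE_cong: "simE f u u' \<Longrightarrow> simE f v v' \<Longrightarrow> simE f (Op u v) (Op u' v')"
  unfolding simE_def satisfies_def by simp

lemma eval_subst: "eval op \<sigma> (eval Op \<rho> t) = eval op (\<lambda>v. eval op \<sigma> (\<rho> v)) t"
  by (induction t) auto

lemma eval_in: "magma_on S op \<Longrightarrow> range \<sigma> \<subseteq> S \<Longrightarrow> eval op \<sigma> u \<in> S"
  by (induction u) (auto simp: magma_on_def)

lemma simE_inst:
  fixes \<rho> :: "var \<Rightarrow> 'a mw"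
  shows "simE f (eval Op \<rho> E_lhs) (eval Op \<rho> (E_rhs f))"
  unfolding simE_def
proof (intro allI impI, elim conjE)
  fix S :: "'a mw set" and op
  assume m: "magma_on S op" and s: "satisfies S op E_lhs (E_rhs f)"
  show "satisfies S op (eval Op \<rho> E_lhs) (eval Op \<rho> (E_rhs f))"
    unfolding satisfies_def
  proof (intro allI impI)
    fix \<sigma> :: "'a \<Rightarrow> 'a mw" assume r: "range \<sigma> \<subseteq> S"
    have "range (\<lambda>v. eval op \<sigma> (\<rho> v)) \<subseteq> S" using eval_in[OF m r] by auto
    then show "eval op \<sigma> (eval Op \<rho> E_lhs) = eval op \<sigma> (eval Op \<rho> (E_rhs f))"
      using s unfolding satisfies_def eval_subst by blast
  qed
qed

lemma eval_Op_Leaf[simp]: "eval Op Leaf u = u"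
  by (induction u) auto

definition nop :: "var mw \<Rightarrow> 'a mw \<Rightarrow> 'a mw \<Rightarrow> 'a mw" where
  "nop f u v = (if simE f (Op u v) u then u else Op u v)"

lemma nop_sim: "simE f (nop f u v) (Op u v)"
  unfolding nop_def using simE_sym simE_refl by auto

lemma eval_nop_sim: "simE f (eval (nop f) \<rho> t) (eval Op \<rho> t)"
proof (induction t)
  case (Leaf x) then show ?case by (simp add: simE_refl)
next
  case (Op t1 t2)
  then show ?case using nop_sim simE_cong simE_trans by fastforce
qed

lemma nop_model:
  fixes f :: "var mw"
  shows "satisfies (UNIV :: 'a mw set) (nop f) E_lhs (E_rhs f)"
  unfolding satisfies_def
proof (intro allI impI)
  fix \<rho> :: "var \<Rightarrow> 'a mw"
  let ?s = "eval (nop f) \<rho> f"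
  have a: "simE f ?s (eval Op \<rho> f)" by (rule eval_nop_sim)
  have b: "simE f (Op (\<rho> Vx) ?s) (Op (\<rho> Vx) (eval Op \<rho> f))"
    using a simE_cong simE_refl by blast
  have c: "simE f (Op (\<rho> Vx) (eval Op \<rho> f)) (\<rho> Vx)"
    using simE_inst[where \<rho>=\<rho> and f=f] simE_sym by (simp add: E_lhs_def E_rhs_def)
  have "simE f (Op (\<rho> Vx) ?s) (\<rho> Vx)" using b c simE_trans by blast
  then show "eval (nop f) \<rho> E_lhs = eval (nop f) \<rho> (E_rhs f)"
    by (simp add: E_lhs_def E_rhs_def nop_def)
qed

lemma sim_eval_eq:
  fixes w w' :: "'a mw"
  assumes "simE f w w'"
  shows "eval (nop f) Leaf w = eval (nop f) Leaf w'"
proof -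
  have "magma_on (UNIV :: 'a mw set) (nop f)" by (simp add: magma_on_def)
  with nop_model[of f] assms have "satisfies (UNIV :: 'a mw set) (nop f) w w'"
    unfolding simE_def by blast
  then show ?thesis unfolding satisfies_def by simp
qed

lemma eval_irred:
  assumes "irreducibleE f (Op w1 w2)"
  shows "eval (nop f) Leaf (Op w1 w2) = Op (eval (nop f) Leaf w1) (eval (nop f) Leaf w2)"
proof -
  let ?A = "eval (nop f) Leaf w1" and ?B = "eval (nop f) Leaf w2"
  have hA: "simE f ?A w1" using eval_nop_sim[where f=f and \<rho>=Leaf and t=w1] by simp
  have hB: "simE f ?B w2" using eval_nop_sim[where f=f and \<rho>=Leaf and t=w2] by simp
  have "\<not> simE f (Op ?A ?B) ?A"
  proof
    assume h: "simE f (Op ?A ?B) ?A"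
    have "simE f w1 (Op w1 w2)"
      proof -
      have "simE f (Op w1 w2) (Op ?A ?B)" using hA hB simE_cong simE_sym by blast
      then have "simE f (Op w1 w2) w1" using h hA simE_trans by blast
      then show ?thesis using simE_sym by blast
    qed
    then show False using assms unfolding irreducibleE_def reducesE_def by blast
  qed
  then show ?thesis by (simp add: nop_def)
qed

theorem mainTheorem12:
  fixes f :: "var mw" and w w' :: "'a mw"
  assumes "E_implies_right_absorb f TYPE('a)"
    and "irreducibleE f w" and "irreducibleE f w'"
  shows "simE f w w' \<longleftrightarrow>
           ((\<exists>a. w = Leaf a \<and> w' = Leaf a) \<or>
            (\<exists>w1 w2 w1' w2'. w = Op w1 w2 \<and> w' = Op w1' w2' \<and>
                simE f w1 w1' \<and> simE f w2 w2'))"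
proof
  assume h: "simE f w w'"
  have e: "eval (nop f) Leaf w = eval (nop f) Leaf w'" by (rule sim_eval_eq[OF h])
  have hs: "\<And>u::'a mw. simE f (eval (nop f) Leaf u) u"
    using eval_nop_sim[where f=f and \<rho>=Leaf] by simp
  show "((\<exists>a. w = Leaf a \<and> w' = Leaf a) \<or>
            (\<exists>w1 w2 w1' w2'. w = Op w1 w2 \<and> w' = Op w1' w2' \<and>
                simE f w1 w1' \<and> simE f w2 w2'))"
  proof (cases w)
    case (Leaf a)
    show ?thesis
    proof (cases w')
      case (Leaf b) then show ?thesis using e \<open>w = Leaf a\<close> by simp
    next
      case (Op u v)
      have "eval (nop f) Leaf w' = Op (eval (nop f) Leaf u) (eval (nop f) Leaf v)"
        using eval_irred assms(3) Op by simp
      then show ?thesis using e \<open>w = Leaf a\<close> by simp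
    qed
  next
    case (Op w1 w2)
    show ?thesis
    proof (cases w')
      case (Leaf b)
      have "eval (nop f) Leaf w = Op (eval (nop f) Leaf w1) (eval (nop f) Leaf w2)"
        using eval_irred assms(2) \<open>w = Op w1 w2\<close> by simp
      then show ?thesis using e Leaf by simp
    next
      case (Op u v)
      have "eval (nop f) Leaf w1 = eval (nop f) Leaf u \<and> eval (nop f) Leaf w2 = eval (nop f) Leaf v"
      proof -
        have "eval (nop f) Leaf w = Op (eval (nop f) Leaf w1) (eval (nop f) Leaf w2)"
          using eval_irred assms(2) \<open>w = Op w1 w2\<close> by simp
        moreover have "eval (nop f) Leaf w' = Op (eval (nop f) Leaf u) (eval (nop f) Leaf v)"
          using eval_irred assms(3) Op by simp
        ultimately show ?thesis using e by simp
      qed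
      then have "simE f w1 u \<and> simE f w2 v" using hs[of w1] hs[of u] hs[of w2] hs[of v] simE_sym simE_trans by metis
      then show ?thesis using Op \<open>w = Op w1 w2\<close> by blast
    qed
  qed
next
  assume "((\<exists>a. w = Leaf a \<and> w' = Leaf a) \<or>
            (\<exists>w1 w2 w1' w2'. w = Op w1 w2 \<and> w' = Op w1' w2' \<and>
                simE f w1 w1' \<and> simE f w2 w2'))"
  then show "simE f w w'" using simE_refl simE_cong by blast
qed

end
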